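(* Conjugation by $\nu$ induces an isomorphism of Lie algebras $\mathfrak{sder}_2\xrightarrow{\sim}\mathfrak{ider}_2$, given by $E_{a,b}\mapsto\nu\circ E_{a,b}\circ\nu=d_{\nu(b)}$.
   Context: $\mathfrak{lie}_2$ is the degree-completed free Lie algebra over $\mathbb{Q}$ on $x,y$; set $z=-x-y$. $\nu$ is the (involutive) automorphism with $\nu(x)=z$, $\nu(y)=y$. For $a,b\in\mathfrak{lie}_2$ with $a$ having no linear term in $x$ and $b$ no linear term in $y$, $E_{a,b}$ is the derivation with $E_{a,b}(x)=[x,a]$, $E_{a,b}(y)=[y,b]$. $\mathfrak{tder}_2$ is the Lie algebra (under commutator) of such $E_{a,b}$ for which $E_{a,b}(z)=[z,c]$ for some $c\in\mathfrak{lie}_2$; $\mathfrak{sder}_2\subset\mathfrak{tder}_2$ consists of those with $[x,a]+[y,b]=0$ (i.e. $E_{a,b}(z)=0$); $\mathfrak{ider}_2\subset\mathfrak{tder}_2$ consists of the Ihara derivations $d_b=E_{0,b}$, $d_b(x)=0$, $d_b(y)=[y,b]$. *)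

theory Defs
  imports Complex_Main "HOL-Library.FuncSet"
begin

text \<open>Model: the degree-completed free associative algebra Q<<x,y>> is represented by
  formal series, i.e. functions from words over the alphabet {X,Y} to rationals.\<close>

datatype gen = X | Y

type_synonym ser = "gen list \<Rightarrow> rat"

definition szero :: ser where "szero = (\<lambda>w. 0)"
definition sadd :: "ser \<Rightarrow> ser \<Rightarrow> ser" where "sadd f g = (\<lambda>w. f w + g w)"
definition ssub :: "ser \<Rightarrow> ser \<Rightarrow> ser" where "ssub f g = (\<lambda>w. f w - g w)"
definition ssmul :: "rat \<Rightarrow> ser \<Rightarrow> ser" where "ssmul c f = (\<lambda>w. c * f w)"

definition smul :: "ser \<Rightarrow> ser \<Rightarrow> ser" where
  "smul f g = (\<lambda>w. \<Sum>i\<le>length w. f (take i w) * g (drop i w))"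

definition br :: "ser \<Rightarrow> ser \<Rightarrow> ser" where "br f g = ssub (smul f g) (smul g f)"

definition gx :: ser where "gx = (\<lambda>w. if w = [X] then 1 else 0)"
definition gy :: ser where "gy = (\<lambda>w. if w = [Y] then 1 else 0)"
definition gz :: ser where "gz = (\<lambda>w. - gx w - gy w)"

definition hom :: "nat \<Rightarrow> ser \<Rightarrow> ser" where
  "hom n f = (\<lambda>w. if length w = n then f w else 0)"

text \<open>Lie polynomials in x, y (the free Lie algebra, inside the free associative algebra).\<close>
inductive_set liepoly :: "ser set" where
  gen_x: "gx \<in> liepoly"
| gen_y: "gy \<in> liepoly"
| add: "f \<in> liepoly \<Longrightarrow> g \<in> liepoly \<Longrightarrow> sadd f g \<in> liepoly"
| smul: "f \<in> liepoly \<Longrightarrow> ssmul c f \<in> liepoly"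
| bracket: "f \<in> liepoly \<Longrightarrow> g \<in> liepoly \<Longrightarrow> br f g \<in> liepoly"

definition lie2 :: "ser set" where "lie2 = {f. \<forall>n. hom n f \<in> liepoly}"

text \<open>The continuous derivation of Q<<x,y>> with x |-> u, y |-> v (u, v without
  constant term): on a word p c s it replaces the letter c by its image.\<close>
definition der :: "ser \<Rightarrow> ser \<Rightarrow> ser \<Rightarrow> ser" where
  "der u v f = (\<lambda>w. \<Sum>i\<le>length w. \<Sum>j\<in>{i<..length w}.
      f (take i w @ [X] @ drop j w) * u (drop i (take j w))
    + f (take i w @ [Y] @ drop j w) * v (drop i (take j w)))"

definition E :: "ser \<Rightarrow> ser \<Rightarrow> ser \<Rightarrow> ser" where "E a b = der (br gx a) (br gy b)"
definition dI :: "ser \<Rightarrow> ser \<Rightarrow> ser" where "dI b = E szero b"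

text \<open>The continuous automorphism nu: x |-> z = -x-y, y |-> y.  Coefficient of letter
  w_i in nu(v_i).\<close>
fun nucoef :: "gen \<Rightarrow> gen \<Rightarrow> rat" where
  "nucoef X _ = -1"
| "nucoef Y Y = 1"
| "nucoef Y X = 0"

definition nu :: "ser \<Rightarrow> ser" where
  "nu f = (\<lambda>w. \<Sum>v\<in>{v. length v = length w}.
              f v * (\<Prod>i<length w. nucoef (v ! i) (w ! i)))"

text \<open>Derivations of lie_2 are represented as functions restricted to lie2.\<close>
definition tcond :: "ser \<Rightarrow> ser \<Rightarrow> bool" where
  "tcond a b \<longleftrightarrow> a \<in> lie2 \<and> b \<in> lie2 \<and> a [X] = 0 \<and> b [Y] = 0
                 \<and> (\<exists>c\<in>lie2. E a b gz = br gz c)"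

definition tder2 :: "(ser \<Rightarrow> ser) set" where
  "tder2 = {restrict (E a b) lie2 | a b. tcond a b}"

definition sder2 :: "(ser \<Rightarrow> ser) set" where
  "sder2 = {restrict (E a b) lie2 | a b. tcond a b \<and> sadd (br gx a) (br gy b) = szero}"

definition ider2 :: "(ser \<Rightarrow> ser) set" where
  "ider2 = {restrict (E szero b) lie2 | b. tcond szero b}"

definition dcomm :: "(ser \<Rightarrow> ser) \<Rightarrow> (ser \<Rightarrow> ser) \<Rightarrow> ser \<Rightarrow> ser" where
  "dcomm D1 D2 = restrict (\<lambda>f. ssub (D1 (D2 f)) (D2 (D1 f))) lie2"
definition dadd :: "(ser \<Rightarrow> ser) \<Rightarrow> (ser \<Rightarrow> ser) \<Rightarrow> ser \<Rightarrow> ser" where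
  "dadd D1 D2 = restrict (\<lambda>f. sadd (D1 f) (D2 f)) lie2"
definition dsmul :: "rat \<Rightarrow> (ser \<Rightarrow> ser) \<Rightarrow> ser \<Rightarrow> ser" where
  "dsmul c D = restrict (\<lambda>f. ssmul c (D f)) lie2"

definition conjnu :: "(ser \<Rightarrow> ser) \<Rightarrow> ser \<Rightarrow> ser" where
  "conjnu D = restrict (\<lambda>f. nu (D (nu f))) lie2"

end

theory Submission imports Defs begin

lemma UNIV_gen: "(UNIV :: gen set) = {X, Y}"
  using gen.exhaust by auto

lemma finite_gen[simp]: "finite (UNIV :: gen set)"
  by (simp add: UNIV_gen)

definition W :: "nat \<Rightarrow> gen list set" where "W n = {v. length v \<le> n}"

lemma finite_W[simp]: "finite (W n)"
proof -
  have "W n = {xs. set xs \<subseteq> UNIV \<and> length xs \<le> n}" by (auto simp: W_def)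
  then show ?thesis using finite_lists_length_le[OF finite_gen] by simp
qed

definition mon :: "gen list \<Rightarrow> ser" where "mon p = (\<lambda>w. if w = p then 1 else 0)"

definition good :: "(ser \<Rightarrow> ser) \<Rightarrow> bool" where
  "good L \<longleftrightarrow> (\<forall>f w. L f w = (\<Sum>v\<in>W (length w). f v * L (mon v) w))"

lemma good_kernel:
  fixes A :: "gen list \<Rightarrow> 'x set"
  assumes L: "\<And>f w. L f w = (\<Sum>x\<in>A w. f (h w x) * k w x)"
    and fin: "\<And>w. finite (A w)"
    and len: "\<And>w x. x \<in> A w \<Longrightarrow> length (h w x) \<le> length w"
  shows "good L"
  unfolding good_def
proof (intro allI)
  fix f w
  have m: "L (mon v) w = (\<Sum>x\<in>A w. (if h w x = v then k w x else 0))" for v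
    unfolding L mon_def by (rule sum.cong) auto
  have "(\<Sum>v\<in>W (length w). f v * L (mon v) w)
      = (\<Sum>v\<in>W (length w). \<Sum>x\<in>A w. (if h w x = v then f v * k w x else 0))"
    unfolding m sum_distrib_left by (intro sum.cong) auto
  also have "\<dots> = (\<Sum>x\<in>A w. \<Sum>v\<in>W (length w). (if h w x = v then f v * k w x else 0))"
    by (rule sum.swap)
  also have "\<dots> = (\<Sum>x\<in>A w. f (h w x) * k w x)"
  proof (rule sum.cong)
    fix x assume x: "x \<in> A w"
    have "(\<Sum>v\<in>W (length w). (if h w x = v then f v * k w x else 0))
        = (\<Sum>v\<in>W (length w). (if v = h w x then f (h w x) * k w x else 0))"
      by (rule sum.cong) auto
    also have "\<dots> = f (h w x) * k w x"
      using len[OF x] by (simp only: sum.delta[OF finite_W]) (simp add: W_def)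
    finally show "(\<Sum>v\<in>W (length w). (if h w x = v then f v * k w x else 0)) = f (h w x) * k w x" .
  qed simp
  finally show "L f w = (\<Sum>v\<in>W (length w). f v * L (mon v) w)" using L by simp
qed

lemma good_mon_zero:
  assumes "good L" "length w < length v"
  shows "L (mon v) w = 0"
proof -
  have "L (mon v) w = (\<Sum>u\<in>W (length w). mon v u * L (mon u) w)"
    using assms(1) unfolding good_def by blast
  also have "\<dots> = 0"
    by (rule sum.neutral) (use assms(2) in \<open>auto simp: mon_def W_def\<close>)
  finally show ?thesis .
qed

lemma good_comp:
  assumes g1: "good L1" and g2: "good L2"
  shows "good (\<lambda>f. L1 (L2 f))"
  unfolding good_def
proof (intro allI)
  fix f w
  have "L1 (L2 f) w = (\<Sum>v\<in>W (length w). L2 f v * L1 (mon v) w)"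
    using g1 unfolding good_def by blast
  also have "\<dots> = (\<Sum>v\<in>W (length w). \<Sum>u\<in>W (length w). f u * L2 (mon u) v * L1 (mon v) w)"
  proof (rule sum.cong)
    fix v assume v: "v \<in> W (length w)"
    have "L2 f v = (\<Sum>u\<in>W (length v). f u * L2 (mon u) v)"
      using g2 unfolding good_def by blast
    also have "\<dots> = (\<Sum>u\<in>W (length w). f u * L2 (mon u) v)"
    proof (rule sum.mono_neutral_left)
      show "W (length v) \<subseteq> W (length w)" using v by (auto simp: W_def)
      show "\<forall>i\<in>W (length w) - W (length v). f i * L2 (mon i) v = 0"
        using good_mon_zero[OF g2] by (auto simp: W_def)
    qed simp
    finally show "L2 f v * L1 (mon v) w = (\<Sum>u\<in>W (length w). f u * L2 (mon u) v * L1 (mon v) w)"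
      by (simp add: sum_distrib_right)
  qed simp
  also have "\<dots> = (\<Sum>u\<in>W (length w). \<Sum>v\<in>W (length w). f u * L2 (mon u) v * L1 (mon v) w)"
    by (rule sum.swap)
  also have "\<dots> = (\<Sum>u\<in>W (length w). f u * L1 (L2 (mon u)) w)"
  proof (rule sum.cong)
    fix u assume u: "u \<in> W (length w)"
    have "L1 (L2 (mon u)) w = (\<Sum>v\<in>W (length w). L2 (mon u) v * L1 (mon v) w)"
      using g1 unfolding good_def by blast
    then show "(\<Sum>v\<in>W (length w). f u * L2 (mon u) v * L1 (mon v) w) = f u * L1 (L2 (mon u)) w"
      by (simp add: sum_distrib_left mult.assoc)
  qed simp
  finally show "L1 (L2 f) w = (\<Sum>v\<in>W (length w). f v * L1 (L2 (mon v)) w)" .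
qed

lemma good_eq:
  assumes "good La" "good Lb" "\<And>p. La (mon p) = Lb (mon p)"
  shows "La f = Lb f"
proof
  fix w
  have "La f w = (\<Sum>v\<in>W (length w). f v * La (mon v) w)" using assms(1) unfolding good_def by blast
  also have "\<dots> = (\<Sum>v\<in>W (length w). f v * Lb (mon v) w)" using assms(3) by simp
  also have "\<dots> = Lb f w" using assms(2) unfolding good_def by metis
  finally show "La f w = Lb f w" .
qed

lemma good_add:
  assumes "good L1" "good L2"
  shows "good (\<lambda>f. sadd (L1 f) (L2 f))"
  unfolding good_def
proof (intro allI)
  fix f w
  have a: "L1 f w = (\<Sum>v\<in>W (length w). f v * L1 (mon v) w)" using assms(1) unfolding good_def by blast
  have b: "L2 f w = (\<Sum>v\<in>W (length w). f v * L2 (mon v) w)" using assms(2) unfolding good_def by blast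
  show "sadd (L1 f) (L2 f) w = (\<Sum>v\<in>W (length w). f v * sadd (L1 (mon v)) (L2 (mon v)) w)"
    unfolding sadd_def a b by (simp add: sum.distrib distrib_left)
qed

lemma good_smult:
  assumes "good L"
  shows "good (\<lambda>f. ssmul c (L f))"
  unfolding good_def
proof (intro allI)
  fix f w
  have a: "L f w = (\<Sum>v\<in>W (length w). f v * L (mon v) w)" using assms(1) unfolding good_def by blast
  show "ssmul c (L f) w = (\<Sum>v\<in>W (length w). f v * ssmul c (L (mon v)) w)"
    unfolding ssmul_def a by (simp add: sum_distrib_left mult.left_commute)
qed

lemma good_id: "good (\<lambda>f. f)"
  by (rule good_kernel[where A="\<lambda>w. {()}" and h="\<lambda>w x. w" and k="\<lambda>w x. 1"]) auto

lemma sum_single0: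
  fixes n :: nat
  assumes "\<And>i. 0 < i \<Longrightarrow> i \<le> n \<Longrightarrow> g i = (0::rat)"
  shows "(\<Sum>i\<le>n. g i) = g 0"
proof -
  have "(\<Sum>i\<le>n. g i) = (\<Sum>i\<le>n. if i = 0 then g 0 else 0)"
  proof (rule sum.cong)
    fix i assume "i \<in> {..n}"
    then show "g i = (if i = 0 then g 0 else 0)" using assms[of i] by (cases "i = 0") auto
  qed simp
  also have "\<dots> = g 0" by (subst sum.delta) auto
  finally show ?thesis .
qed

lemma mon_mult: "smul (mon p) (mon q) = mon (p @ q)"
proof
  fix w
  have "smul (mon p) (mon q) w = (\<Sum>i\<le>length w. if i = length p \<and> w = p @ q then 1 else 0)"
    unfolding smul_def mon_def
  proof (rule sum.cong)
    fix i assume i: "i \<in> {..length w}"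
    have "(take i w = p \<and> drop i w = q) \<longleftrightarrow> (i = length p \<and> w = p @ q)"
    proof
      assume a: "take i w = p \<and> drop i w = q"
      then have "w = p @ q" by (metis append_take_drop_id)
      moreover have "i = length p" using a i by auto
      ultimately show "i = length p \<and> w = p @ q" by simp
    next
      assume "i = length p \<and> w = p @ q" then show "take i w = p \<and> drop i w = q" by simp
    qed
    then show "(if take i w = p then 1 else 0) * (if drop i w = q then 1 else 0)
        = (if i = length p \<and> w = p @ q then 1 else (0::rat))" by auto
  qed simp
  also have "\<dots> = mon (p @ q) w"
    by (cases "w = p @ q") (auto simp: mon_def sum.delta)
  finally show "smul (mon p) (mon q) w = mon (p @ q) w" .
qed

lemma good_lmul: "good (\<lambda>f. smul f g)"
  by (rule good_kernel[where A="\<lambda>w. {..length w}" and h="\<lambda>w i. take i w"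
        and k="\<lambda>w i. g (drop i w)"]) (auto simp: smul_def)

lemma good_rmul: "good (\<lambda>f. smul g f)"
  by (rule good_kernel[where A="\<lambda>w. {..length w}" and h="\<lambda>w i. drop i w"
        and k="\<lambda>w i. g (take i w)"]) (auto simp: smul_def mult.commute)

lemma smul_assoc: "smul (smul f g) h = smul f (smul g h)"
proof -
  have 1: "smul (smul (mon p) (mon q)) (mon r) = smul (mon p) (smul (mon q) (mon r))" for p q r
    by (simp add: mon_mult)
  have 2: "smul (smul (mon p) (mon q)) h = smul (mon p) (smul (mon q) h)" for p q
    by (rule good_eq[where La="\<lambda>h. smul (smul (mon p) (mon q)) h"
          and Lb="\<lambda>h. smul (mon p) (smul (mon q) h)"])
      (auto intro: good_rmul good_comp[OF good_rmul good_rmul] simp: 1)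
  have 3: "smul (smul (mon p) g) h = smul (mon p) (smul g h)" for p
    by (rule good_eq[where La="\<lambda>g. smul (smul (mon p) g) h"
          and Lb="\<lambda>g. smul (mon p) (smul g h)"])
      (auto intro: good_comp[OF good_lmul good_rmul] good_comp[OF good_rmul good_lmul] simp: 2)
  show ?thesis
    by (rule good_eq[where La="\<lambda>f. smul (smul f g) h"
          and Lb="\<lambda>f. smul f (smul g h)"])
      (auto intro: good_comp[OF good_lmul good_lmul] good_lmul simp: 3)
qed

lemma smul_one_left[simp]: "smul (mon []) f = f"
proof
  fix w show "smul (mon []) f w = f w"
    unfolding smul_def mon_def by (subst sum_single0) auto
qed

lemma smul_one_right[simp]: "smul f (mon []) = f"
proof
  fix w
  have "smul f (mon []) w = (\<Sum>i\<le>length w. if i = length w then f w else 0)"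
    unfolding smul_def mon_def by (rule sum.cong) auto
  then show "smul f (mon []) w = f w" by (simp add: sum.delta)
qed

lemma smul_add_left: "smul (sadd f g) h = sadd (smul f h) (smul g h)"
  by (auto simp: smul_def sadd_def sum.distrib distrib_right)
lemma smul_add_right: "smul h (sadd f g) = sadd (smul h f) (smul h g)"
  by (auto simp: smul_def sadd_def sum.distrib distrib_left)
lemma smul_sub_left: "smul (ssub f g) h = ssub (smul f h) (smul g h)"
  by (auto simp: smul_def ssub_def sum_subtractf left_diff_distrib)
lemma smul_sub_right: "smul h (ssub f g) = ssub (smul h f) (smul h g)"
  by (auto simp: smul_def ssub_def sum_subtractf right_diff_distrib)
lemma smul_smult_left: "smul (ssmul c f) h = ssmul c (smul f h)"
  by (auto simp: smul_def ssmul_def sum_distrib_left mult.assoc)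
lemma smul_smult_right: "smul h (ssmul c f) = ssmul c (smul h f)"
  by (auto simp: smul_def ssmul_def sum_distrib_left mult.left_commute)
lemma smul_zero_left[simp]: "smul szero h = szero"
  by (auto simp: smul_def szero_def)
lemma smul_zero_right[simp]: "smul h szero = szero"
  by (auto simp: smul_def szero_def)

lemma smul_len1:
  assumes "\<And>u. length u \<noteq> 1 \<Longrightarrow> s u = 0"
  shows "smul s f (a # w) = s [a] * f w" and "smul s f [] = 0"
proof -
  have "smul s f (a # w) = (\<Sum>i\<le>Suc (length w). s (take i (a # w)) * f (drop i (a # w)))"
    by (simp add: smul_def)
  also have "\<dots> = s (take 0 (a # w)) * f (drop 0 (a # w)) + (\<Sum>i\<le>length w. s (take (Suc i) (a # w)) * f (drop (Suc i) (a # w)))"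
    by (rule sum.atMost_Suc_shift)
  also have "\<dots> = (\<Sum>i\<le>length w. s (a # take i w) * f (drop i w))"
    using assms[of "[]"] by simp
  also have "\<dots> = s (a # take 0 w) * f (drop 0 w)"
    by (rule sum_single0) (use assms in \<open>auto\<close>)
  finally show "smul s f (a # w) = s [a] * f w" by simp
  show "smul s f [] = 0" using assms[of "[]"] by (simp add: smul_def)
qed

lemma nu_sadd: "nu (sadd f g) = sadd (nu f) (nu g)"
  by (auto simp: nu_def sadd_def sum.distrib distrib_right)
lemma nu_ssub: "nu (ssub f g) = ssub (nu f) (nu g)"
  by (auto simp: nu_def ssub_def sum_subtractf left_diff_distrib)
lemma nu_ssmul: "nu (ssmul c f) = ssmul c (nu f)"
  by (auto simp: nu_def ssmul_def sum_distrib_left mult.assoc)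
lemma nu_szero[simp]: "nu szero = szero"
  by (auto simp: nu_def szero_def)

lemma finite_len_eq: "finite {v::gen list. length v = n}"
  by (rule finite_subset[OF _ finite_W[of n]]) (auto simp: W_def)

lemma good_nu: "good nu"
  by (rule good_kernel[where A="\<lambda>w. {v. length v = length w}" and h="\<lambda>w v. v"
        and k="\<lambda>w v. (\<Prod>i<length w. nucoef (v ! i) (w ! i))"])
     (auto simp: nu_def finite_len_eq)

lemma nu_mon: "nu (mon p) w = (if length w = length p then (\<Prod>i<length w. nucoef (p ! i) (w ! i)) else 0)"
proof -
  have "nu (mon p) w = (\<Sum>v\<in>{v. length v = length w}. if v = p then (\<Prod>i<length w. nucoef (p ! i) (w ! i)) else 0)"
    unfolding nu_def mon_def by (rule sum.cong) auto
  also have "\<dots> = (if length w = length p then (\<Prod>i<length w. nucoef (p ! i) (w ! i)) else 0)"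
    by (subst sum.delta[OF finite_len_eq]) auto
  finally show ?thesis .
qed

lemma nu_mon_Nil: "nu (mon []) = mon []"
proof
  fix w show "nu (mon []) w = mon [] w" unfolding nu_mon by (cases w) (auto simp: mon_def)
qed

lemma nu_mon_Cons: "nu (mon (c # p)) = smul (nu (mon [c])) (nu (mon p))"
proof
  fix w
  have z: "\<And>u. length u \<noteq> 1 \<Longrightarrow> nu (mon [c]) u = 0" by (simp add: nu_mon)
  show "nu (mon (c # p)) w = smul (nu (mon [c])) (nu (mon p)) w"
  proof (cases w)
    case Nil
    have "smul (nu (mon [c])) (nu (mon p)) [] = 0" by (rule smul_len1(2)[OF z])
    then show ?thesis unfolding Nil nu_mon by simp
  next
    case (Cons a w')
    have "smul (nu (mon [c])) (nu (mon p)) (a # w') = nu (mon [c]) [a] * nu (mon p) w'"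
      by (rule smul_len1(1)[OF z])
    then show ?thesis unfolding Cons nu_mon
      by (simp only: length_Cons prod.lessThan_Suc_shift) simp
  qed
qed

lemma nu_mult_mon: "nu (mon (p @ q)) = smul (nu (mon p)) (nu (mon q))"
proof (induction p)
  case Nil then show ?case by (simp add: nu_mon_Nil)
next
  case (Cons c p)
  have "nu (mon ((c # p) @ q)) = smul (nu (mon [c])) (nu (mon (p @ q)))"
    using nu_mon_Cons[of c "p @ q"] by simp
  also have "\<dots> = smul (nu (mon (c # p))) (nu (mon q))"
    unfolding Cons nu_mon_Cons[of c p] smul_assoc ..
  finally show ?case .
qed

lemma nu_mult: "nu (smul f g) = smul (nu f) (nu g)"
proof -
  have 1: "nu (smul (mon p) g) = smul (nu (mon p)) (nu g)" for p
    by (rule good_eq[where La="\<lambda>g. nu (smul (mon p) g)" and Lb="\<lambda>g. smul (nu (mon p)) (nu g)"])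
      (auto intro: good_comp[OF good_nu good_rmul] good_comp[OF good_rmul good_nu]
        simp: mon_mult nu_mult_mon)
  show ?thesis
    by (rule good_eq[where La="\<lambda>f. nu (smul f g)" and Lb="\<lambda>f. smul (nu f) (nu g)"])
      (auto intro: good_comp[OF good_nu good_lmul] good_comp[OF good_lmul good_nu] simp: 1)
qed

lemma gx_mon: "gx = mon [X]" by (auto simp: gx_def mon_def)
lemma gy_mon: "gy = mon [Y]" by (auto simp: gy_def mon_def)
lemma gz_eq: "gz = sadd (ssmul (-1) gx) (ssmul (-1) gy)"
  by (auto simp: gz_def sadd_def ssmul_def)

lemma len1_cases: "length w = Suc 0 \<Longrightarrow> w = [X] \<or> w = [Y]"
  by (cases w) (auto simp: length_Suc_conv intro: gen.exhaust)

lemma nu_gx: "nu gx = gz"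
proof
  fix w
  show "nu gx w = gz w"
    unfolding gx_mon nu_mon using len1_cases[of w] by (auto simp: gz_def gx_def gy_def)
qed

lemma nu_gy: "nu gy = gy"
proof
  fix w
  show "nu gy w = gy w"
    unfolding gy_mon nu_mon using len1_cases[of w] by (auto simp: mon_def)
qed

lemma nu_gz: "nu gz = gx"
  unfolding gz_eq nu_sadd nu_ssmul nu_gx nu_gy
  by (auto simp: gz_def sadd_def ssmul_def)

lemma nu_nu_mon: "nu (nu (mon p)) = mon p"
proof (induction p)
  case Nil then show ?case by (simp add: nu_mon_Nil)
next
  case (Cons c p)
  have c: "nu (nu (mon [c])) = mon [c]"
    by (cases c) (simp_all add: gx_mon[symmetric] gy_mon[symmetric] nu_gx nu_gz nu_gy)
  have m: "mon (c # p) = smul (mon [c]) (mon p)" by (simp add: mon_mult)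
  show ?case
    unfolding m nu_mult Cons c ..
qed

lemma nu_nu: "nu (nu f) = f"
  by (rule good_eq[where La="\<lambda>f. nu (nu f)" and Lb="\<lambda>f. f"])
    (auto intro: good_comp[OF good_nu good_nu] good_id simp: nu_nu_mon)

lemma sadd_assoc: "sadd (sadd f g) h = sadd f (sadd g h)" by (auto simp: sadd_def)
lemma sadd_commute: "sadd f g = sadd g f" by (auto simp: sadd_def)
lemma sadd_left_commute: "sadd f (sadd g h) = sadd g (sadd f h)" by (auto simp: sadd_def)
lemma sadd_zero_left[simp]: "sadd szero f = f" by (auto simp: sadd_def szero_def)
lemma sadd_zero_right[simp]: "sadd f szero = f" by (auto simp: sadd_def szero_def)

definition img :: "ser \<Rightarrow> ser \<Rightarrow> gen \<Rightarrow> ser" where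
  "img u v c = (case c of X \<Rightarrow> u | Y \<Rightarrow> v)"

definition dterm :: "ser \<Rightarrow> ser \<Rightarrow> ser \<Rightarrow> gen list \<Rightarrow> nat \<Rightarrow> nat \<Rightarrow> rat" where
  "dterm u v f w i j = f (take i w @ [X] @ drop j w) * u (drop i (take j w))
    + f (take i w @ [Y] @ drop j w) * v (drop i (take j w))"

lemma der_dterm: "der u v f w = (\<Sum>i\<le>length w. \<Sum>j\<in>{i<..length w}. dterm u v f w i j)"
  by (simp add: der_def dterm_def)

lemma dterm_img: "dterm u v f w i j = (\<Sum>c\<in>UNIV. f (take i w @ [c] @ drop j w) * img u v c (drop i (take j w)))"
  by (simp add: dterm_def UNIV_gen img_def)

definition dS :: "gen list \<Rightarrow> (nat \<times> nat \<times> gen) set" where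
  "dS w = (SIGMA i:{..length w}. ({i<..length w} \<times> UNIV))"
definition dH :: "gen list \<Rightarrow> nat \<times> nat \<times> gen \<Rightarrow> gen list" where
  "dH w x = (case x of (i, j, c) \<Rightarrow> take i w @ [c] @ drop j w)"
definition dK :: "ser \<Rightarrow> ser \<Rightarrow> gen list \<Rightarrow> nat \<times> nat \<times> gen \<Rightarrow> rat" where
  "dK u v w x = (case x of (i, j, c) \<Rightarrow> img u v c (drop i (take j w)))"

lemma der_sigma: "der u v f w = (\<Sum>x\<in>dS w. f (dH w x) * dK u v w x)"
proof -
  define G where "G i j c = f (take i w @ [c] @ drop j w) * img u v c (drop i (take j w))" for i j c
  have "der u v f w = (\<Sum>i\<le>length w. \<Sum>j\<in>{i<..length w}. \<Sum>c\<in>UNIV. G i j c)"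
    unfolding der_dterm dterm_img G_def ..
  also have "\<dots> = (\<Sum>i\<le>length w. \<Sum>(j,c)\<in>{i<..length w} \<times> UNIV. G i j c)"
    by (simp add: sum.cartesian_product)
  also have "\<dots> = (\<Sum>(i,jc)\<in>(SIGMA i:{..length w}. ({i<..length w} \<times> UNIV)). (case jc of (j, c) \<Rightarrow> G i j c))"
    by (rule sum.Sigma) auto
  also have "\<dots> = (\<Sum>x\<in>dS w. f (dH w x) * dK u v w x)"
    unfolding dS_def by (rule sum.cong) (auto simp: G_def dH_def dK_def)
  finally show ?thesis .
qed

lemma good_der: "good (der u v)"
proof (rule good_kernel[where A=dS and h=dH and k="dK u v", OF der_sigma])
  fix w show "finite (dS w)" unfolding dS_def by (intro finite_SigmaI) auto
next
  fix w x assume "x \<in> dS w"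
  then obtain i j c where x: "x = (i, j, c)" "i < j" "j \<le> length w"
    unfolding dS_def by auto
  then show "length (dH w x) \<le> length w" by (simp add: dH_def)
qed

lemma der_sadd: "der u v (sadd f g) = sadd (der u v f) (der u v g)"
  unfolding sadd_def by (rule ext, simp only: der_sigma distrib_right sum.distrib)
lemma der_ssmul: "der u v (ssmul c f) = ssmul c (der u v f)"
  unfolding ssmul_def by (rule ext, simp only: der_sigma sum_distrib_left mult.assoc)
lemma der_ssub: "der u v (ssub f g) = ssub (der u v f) (der u v g)"
  unfolding ssub_def by (rule ext, simp only: der_sigma left_diff_distrib sum_subtractf)
lemma der_szero[simp]: "der u v szero = szero"
  by (auto simp: der_def szero_def)

lemma der_mon_Nil: "der u v (mon []) = szero"
  by (auto simp: der_def mon_def szero_def)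

lemma sum_Suc_ivl: "(\<Sum>j\<in>{Suc i<..Suc n}. g j) = (\<Sum>j\<in>{i<..n}. g (Suc j))"
proof -
  have "{Suc i<..Suc n} = Suc ` {i<..n}"
  proof safe
    fix x assume "x \<in> {Suc i<..Suc n}"
    then show "x \<in> Suc ` {i<..n}" by (intro image_eqI[of _ _ "x - 1"]) auto
  qed auto
  then show ?thesis by (simp add: sum.reindex)
qed

lemma dterm_Cons: "dterm u v f (a # w) (Suc i) (Suc j) = dterm u v (\<lambda>x. f (a # x)) w i j"
  by (simp add: dterm_def)

lemma der_Cons_split:
  "der u v f (a # w) = (\<Sum>j\<in>{0<..Suc (length w)}. dterm u v f (a # w) 0 j)
     + der u v (\<lambda>x. f (a # x)) w"
proof -
  have "der u v f (a # w) = (\<Sum>i\<le>Suc (length w). \<Sum>j\<in>{i<..Suc (length w)}. dterm u v f (a # w) i j)"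
    by (simp add: der_dterm)
  also have "\<dots> = (\<Sum>j\<in>{0<..Suc (length w)}. dterm u v f (a # w) 0 j)
     + (\<Sum>i\<le>length w. \<Sum>j\<in>{Suc i<..Suc (length w)}. dterm u v f (a # w) (Suc i) j)"
    by (rule sum.atMost_Suc_shift)
  also have "(\<Sum>i\<le>length w. \<Sum>j\<in>{Suc i<..Suc (length w)}. dterm u v f (a # w) (Suc i) j)
      = der u v (\<lambda>x. f (a # x)) w"
    by (simp add: sum_Suc_ivl dterm_Cons der_dterm)
  finally show ?thesis .
qed

lemma img_nil: "u [] = 0 \<Longrightarrow> v [] = 0 \<Longrightarrow> img u v c [] = 0"
  by (cases c) (auto simp: img_def)

lemma mon1_len: "length x \<noteq> 1 \<Longrightarrow> mon [c] x = 0"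
  by (auto simp: mon_def)

lemma der_mon_Cons:
  assumes u0: "u [] = 0" and v0: "v [] = 0"
  shows "der u v (mon (c # p)) = sadd (smul (img u v c) (mon p)) (smul (mon [c]) (der u v (mon p)))"
proof (rule ext)
  fix w
  show "der u v (mon (c # p)) w = sadd (smul (img u v c) (mon p)) (smul (mon [c]) (der u v (mon p))) w"
  proof (cases w)
    case Nil
    have "smul (mon [c]) (der u v (mon p)) [] = 0" by (rule smul_len1(2)) (rule mon1_len)
    then show ?thesis using img_nil[of u v c, OF u0 v0]
      by (simp add: Nil sadd_def der_dterm smul_def)
  next
    case (Cons a w')
    have t: "dterm u v (mon (c # p)) w 0 j = img u v c (take j w) * mon p (drop j w)" for j
      unfolding dterm_img by (cases c) (auto simp: UNIV_gen mon_def img_def)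
    have "(\<Sum>j\<in>{0<..Suc (length w')}. dterm u v (mon (c # p)) (a # w') 0 j)
        = (\<Sum>j\<in>{0<..length w}. img u v c (take j w) * mon p (drop j w))"
      using t Cons by simp
    also have "\<dots> = smul (img u v c) (mon p) w"
    proof -
      have e: "{..length w} = insert 0 {0<..length w}" by auto
      show ?thesis unfolding smul_def e using img_nil[of u v c, OF u0 v0] by simp
    qed
    finally have 1: "(\<Sum>j\<in>{0<..Suc (length w')}. dterm u v (mon (c # p)) (a # w') 0 j)
        = smul (img u v c) (mon p) w" .
    have m: "(\<lambda>x. mon (c # p) (a # x)) = (if a = c then mon p else szero)"
      by (auto simp: mon_def szero_def)
    have 2: "der u v (\<lambda>x. mon (c # p) (a # x)) w' = smul (mon [c]) (der u v (mon p)) w"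
    proof -
      have s1: "smul (mon [c]) (der u v (mon p)) (a # w') = mon [c] [a] * der u v (mon p) w'"
        by (rule smul_len1(1)) (rule mon1_len)
      have "mon [c] [a] = (if a = c then 1 else 0)" by (simp add: mon_def)
      then show ?thesis unfolding m Cons s1 using der_szero[of u v] by (auto simp: szero_def)
    qed
    show ?thesis using der_Cons_split[of u v "mon (c # p)" a w'] 1 2 Cons
      by (simp add: sadd_def)
  qed
qed

lemma der_mon_append:
  assumes u0: "u [] = 0" and v0: "v [] = 0"
  shows "der u v (mon (p @ q)) = sadd (smul (der u v (mon p)) (mon q)) (smul (mon p) (der u v (mon q)))"
proof (induction p)
  case Nil then show ?case by (simp add: der_mon_Nil)
next
  case (Cons c p)
  have mc: "mon (c # p) = smul (mon [c]) (mon p)" by (simp add: mon_mult)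
  have "der u v (mon ((c # p) @ q)) = sadd (smul (img u v c) (mon (p @ q))) (smul (mon [c]) (der u v (mon (p @ q))))"
    using der_mon_Cons[of u v c, OF u0 v0, of "p @ q"] by simp
  also have "\<dots> = sadd (smul (img u v c) (mon (p @ q)))
      (smul (mon [c]) (sadd (smul (der u v (mon p)) (mon q)) (smul (mon p) (der u v (mon q)))))"
    using Cons.IH by simp
  also have "\<dots> = sadd (smul (sadd (smul (img u v c) (mon p)) (smul (mon [c]) (der u v (mon p)))) (mon q))
      (smul (smul (mon [c]) (mon p)) (der u v (mon q)))"
    by (simp only: smul_add_left smul_add_right smul_assoc sadd_assoc mon_mult[symmetric])
  also have "\<dots> = sadd (smul (der u v (mon (c # p))) (mon q)) (smul (mon (c # p)) (der u v (mon q)))"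
    by (subst der_mon_Cons[of u v c, OF u0 v0, of p]) (simp only: mc)
  finally show ?case .
qed

lemma der_mult:
  assumes u0: "u [] = 0" and v0: "v [] = 0"
  shows "der u v (smul f g) = sadd (smul (der u v f) g) (smul f (der u v g))"
proof -
  have 1: "der u v (smul (mon p) g) = sadd (smul (der u v (mon p)) g) (smul (mon p) (der u v g))" for p
    by (rule good_eq[where La="\<lambda>g. der u v (smul (mon p) g)"
          and Lb="\<lambda>g. sadd (smul (der u v (mon p)) g) (smul (mon p) (der u v g))"])
      (auto intro: good_comp[OF good_der good_rmul] good_add good_rmul good_comp[OF good_rmul good_der]
        simp: mon_mult der_mon_append[of u v, OF u0 v0])
  show ?thesis
    by (rule good_eq[where La="\<lambda>f. der u v (smul f g)"
          and Lb="\<lambda>f. sadd (smul (der u v f) g) (smul f (der u v g))"])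
      (auto intro: good_comp[OF good_der good_lmul] good_add good_lmul good_comp[OF good_lmul good_der]
        simp: 1)
qed

lemma der_gx: "u [] = 0 \<Longrightarrow> v [] = 0 \<Longrightarrow> der u v gx = u"
  using der_mon_Cons[of u v X "[]"] by (simp add: gx_mon der_mon_Nil img_def)
lemma der_gy: "u [] = 0 \<Longrightarrow> v [] = 0 \<Longrightarrow> der u v gy = v"
  using der_mon_Cons[of u v Y "[]"] by (simp add: gy_mon der_mon_Nil img_def)

lemma br_nil: "br f g [] = 0"
  by (simp add: br_def ssub_def smul_def)

lemma der_br:
  assumes "u [] = 0" "v [] = 0"
  shows "der u v (br f g) = sadd (br (der u v f) g) (br f (der u v g))"
  unfolding br_def der_ssub der_mult[of u v, OF assms]
  by (auto simp: ssub_def sadd_def)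

lemma nu_br: "nu (br f g) = br (nu f) (nu g)"
  unfolding br_def nu_ssub nu_mult ..

lemma szero_lie: "szero \<in> liepoly"
proof -
  have "ssmul 0 gx = szero" by (auto simp: ssmul_def szero_def)
  then show ?thesis using liepoly.smul[OF liepoly.gen_x, of 0] by simp
qed

lemma ssub_lie: "f \<in> liepoly \<Longrightarrow> g \<in> liepoly \<Longrightarrow> ssub f g \<in> liepoly"
proof -
  assume f: "f \<in> liepoly" and g: "g \<in> liepoly"
  have "ssub f g = sadd f (ssmul (-1) g)" by (auto simp: ssub_def sadd_def ssmul_def)
  then show ?thesis using liepoly.add[OF f liepoly.smul[OF g]] by simp
qed

lemma sum_lie:
  assumes "finite K" "\<And>k. k \<in> K \<Longrightarrow> F k \<in> liepoly"
  shows "(\<lambda>w. \<Sum>k\<in>K. F k w) \<in> liepoly"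
  using assms
proof (induction K rule: finite_induct)
  case empty
  then show ?case using szero_lie by (simp add: szero_def)
next
  case (insert k K)
  have "(\<lambda>w. \<Sum>k\<in>insert k K. F k w) = sadd (F k) (\<lambda>w. \<Sum>k\<in>K. F k w)"
    using insert(1,2) by (auto simp: sadd_def)
  then show ?case using liepoly.add insert by simp
qed

lemma liepoly_nil: "f \<in> liepoly \<Longrightarrow> f [] = 0"
  by (induction rule: liepoly.induct)
     (auto simp: gx_def gy_def sadd_def ssmul_def br_nil)

lemma der_lie:
  assumes u: "u \<in> liepoly" and v: "v \<in> liepoly"
  shows "f \<in> liepoly \<Longrightarrow> der u v f \<in> liepoly"
proof (induction rule: liepoly.induct)
  case gen_x then show ?case using der_gx[of u v, OF liepoly_nil[OF u] liepoly_nil[OF v]] u by simp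
next
  case gen_y then show ?case using der_gy[of u v, OF liepoly_nil[OF u] liepoly_nil[OF v]] v by simp
next
  case (add f g) then show ?case by (simp add: der_sadd liepoly.add)
next
  case (smul f c) then show ?case by (simp add: der_ssmul liepoly.smul)
next
  case (bracket f g)
  then show ?case
    by (simp add: der_br[of u v, OF liepoly_nil[OF u] liepoly_nil[OF v]] liepoly.add liepoly.bracket)
qed

lemma nu_lie: "f \<in> liepoly \<Longrightarrow> nu f \<in> liepoly"
proof (induction rule: liepoly.induct)
  case gen_x
  then show ?case unfolding nu_gx gz_eq by (intro liepoly.add liepoly.smul liepoly.gen_x liepoly.gen_y)
next
  case gen_y then show ?case by (simp add: nu_gy liepoly.gen_y)
next
  case (add f g) then show ?case by (simp add: nu_sadd liepoly.add)
next
  case (smul f c) then show ?case by (simp add: nu_ssmul liepoly.smul)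
next
  case (bracket f g) then show ?case by (simp add: nu_br liepoly.bracket)
qed

lemma sum_delta_cond:
  fixes n :: nat
  shows "(\<Sum>k\<le>n. if k = i \<and> P then x else 0) = (if i \<le> n \<and> P then x else (0::rat))"
  by (cases P) (auto simp: sum.delta)

lemma sum_delta_gen:
  "finite S \<Longrightarrow> (\<Sum>m\<in>S. if m = a \<and> P then x else 0) = (if a \<in> S \<and> P then x else (0::rat))"
  by (cases P) (auto simp: sum.delta)

lemma hom_smul: "hom n (smul f g) = (\<lambda>w. \<Sum>k\<le>n. smul (hom k f) (hom (n - k) g) w)"
proof (rule ext)
  fix w
  have "(\<Sum>k\<le>n. smul (hom k f) (hom (n - k) g) w)
      = (\<Sum>k\<le>n. \<Sum>i\<le>length w. hom k f (take i w) * hom (n - k) g (drop i w))"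
    by (simp add: smul_def)
  also have "\<dots> = (\<Sum>i\<le>length w. \<Sum>k\<le>n. hom k f (take i w) * hom (n - k) g (drop i w))"
    by (rule sum.swap)
  also have "\<dots> = (\<Sum>i\<le>length w. if length w = n then f (take i w) * g (drop i w) else 0)"
  proof (rule sum.cong)
    fix i assume i: "i \<in> {..length w}"
    have "(\<Sum>k\<le>n. hom k f (take i w) * hom (n - k) g (drop i w))
        = (\<Sum>k\<le>n. if k = i \<and> length w = n then f (take i w) * g (drop i w) else 0)"
      by (rule sum.cong) (use i in \<open>auto simp: hom_def\<close>)
    also have "\<dots> = (if length w = n then f (take i w) * g (drop i w) else 0)"
      using i by (subst sum_delta_cond) auto
    finally show "(\<Sum>k\<le>n. hom k f (take i w) * hom (n - k) g (drop i w))
        = (if length w = n then f (take i w) * g (drop i w) else 0)" .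
  qed simp
  also have "\<dots> = hom n (smul f g) w"
    by (simp add: hom_def smul_def)
  finally show "hom n (smul f g) w = (\<Sum>k\<le>n. smul (hom k f) (hom (n - k) g) w)" ..
qed

lemma img_hom: "img (hom k u) (hom k v) c z = (if length z = k then img u v c z else 0)"
  by (cases c) (auto simp: img_def hom_def)

lemma dS_mem: "x \<in> dS w \<longleftrightarrow> (\<exists>i j c. x = (i, j, c) \<and> i < j \<and> j \<le> length w)"
  by (auto simp: dS_def)

lemma finite_dS: "finite (dS w)"
  unfolding dS_def by (intro finite_SigmaI) auto

lemma hom_der: "hom n (der u v f) = (\<lambda>w. \<Sum>m\<in>{1..n}. der (hom (n + 1 - m) u) (hom (n + 1 - m) v) (hom m f) w)"
proof (rule ext)
  fix w
  have "(\<Sum>m\<in>{1..n}. der (hom (n + 1 - m) u) (hom (n + 1 - m) v) (hom m f) w)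
     = (\<Sum>m\<in>{1..n}. \<Sum>x\<in>dS w. hom m f (dH w x) * dK (hom (n + 1 - m) u) (hom (n + 1 - m) v) w x)"
    by (simp add: der_sigma)
  also have "\<dots> = (\<Sum>x\<in>dS w. \<Sum>m\<in>{1..n}. hom m f (dH w x) * dK (hom (n + 1 - m) u) (hom (n + 1 - m) v) w x)"
    by (rule sum.swap)
  also have "\<dots> = (\<Sum>x\<in>dS w. if length w = n then f (dH w x) * dK u v w x else 0)"
  proof (rule sum.cong)
    fix x assume x: "x \<in> dS w"
    then obtain i j c where xe: "x = (i, j, c)" and ij: "i < j" "j \<le> length w" by (auto simp: dS_mem)
    have ld: "length (dH w x) = i + 1 + length w - j" using xe ij by (simp add: dH_def)
    have "(\<Sum>m\<in>{1..n}. hom m f (dH w x) * dK (hom (n + 1 - m) u) (hom (n + 1 - m) v) w x)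
       = (\<Sum>m\<in>{1..n}. if m = i + 1 + length w - j \<and> length w = n then f (dH w x) * dK u v w x else 0)"
    proof (rule sum.cong)
      fix m assume m: "m \<in> {1..n}"
      show "hom m f (dH w x) * dK (hom (n + 1 - m) u) (hom (n + 1 - m) v) w x
         = (if m = i + 1 + length w - j \<and> length w = n then f (dH w x) * dK u v w x else 0)"
      proof -
        have dk: "dK (hom (n + 1 - m) u) (hom (n + 1 - m) v) w x = (if j - i = n + 1 - m then dK u v w x else 0)"
          using xe ij by (simp add: dK_def img_hom)
        have hf: "hom m f (dH w x) = (if i + 1 + length w - j = m then f (dH w x) else 0)"
          unfolding hom_def ld by simp
        have eq: "(i + 1 + length w - j = m \<and> j - i = n + 1 - m) \<longleftrightarrow> (m = i + 1 + length w - j \<and> length w = n)"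
          using m ij by (simp only: atLeastAtMost_iff) presburger
        have "(if i + 1 + length w - j = m then f (dH w x) else 0) * (if j - i = n + 1 - m then dK u v w x else 0)
            = (if i + 1 + length w - j = m \<and> j - i = n + 1 - m then f (dH w x) * dK u v w x else 0)"
          by simp
        then show ?thesis unfolding dk hf eq .
      qed
    qed simp
    also have "\<dots> = (if length w = n then f (dH w x) * dK u v w x else 0)"
    proof (cases "length w = n")
      case True
      have mem: "i + 1 + length w - j \<in> {1..n}" using True ij by auto
      show ?thesis by (subst sum_delta_gen) (use mem True in auto)
    qed simp
    finally show "(\<Sum>m\<in>{1..n}. hom m f (dH w x) * dK (hom (n + 1 - m) u) (hom (n + 1 - m) v) w x)
       = (if length w = n then f (dH w x) * dK u v w x else 0)" .
  qed simp
  also have "\<dots> = hom n (der u v f) w"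
    by (simp add: hom_def der_sigma)
  finally show "hom n (der u v f) w = (\<Sum>m\<in>{1..n}. der (hom (n + 1 - m) u) (hom (n + 1 - m) v) (hom m f) w)" ..
qed

lemma hom_nu: "hom n (nu f) = nu (hom n f)"
proof (rule ext)
  fix w
  show "hom n (nu f) w = nu (hom n f) w"
    by (cases "length w = n") (auto simp: hom_def nu_def intro!: sum.neutral)
qed

lemma hom_sadd: "hom n (sadd f g) = sadd (hom n f) (hom n g)" by (auto simp: hom_def sadd_def)
lemma hom_ssub: "hom n (ssub f g) = ssub (hom n f) (hom n g)" by (auto simp: hom_def ssub_def)
lemma hom_ssmul: "hom n (ssmul c f) = ssmul c (hom n f)" by (auto simp: hom_def ssmul_def)
lemma hom_szero: "hom n szero = szero" by (auto simp: hom_def szero_def)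

lemma lie2_iff: "f \<in> lie2 \<longleftrightarrow> (\<forall>n. hom n f \<in> liepoly)" by (simp add: lie2_def)

lemma sadd_lie2: "f \<in> lie2 \<Longrightarrow> g \<in> lie2 \<Longrightarrow> sadd f g \<in> lie2"
  by (simp add: lie2_iff hom_sadd liepoly.add)
lemma ssub_lie2: "f \<in> lie2 \<Longrightarrow> g \<in> lie2 \<Longrightarrow> ssub f g \<in> lie2"
  by (simp add: lie2_iff hom_ssub ssub_lie)
lemma ssmul_lie2: "f \<in> lie2 \<Longrightarrow> ssmul c f \<in> lie2"
  by (simp add: lie2_iff hom_ssmul liepoly.smul)
lemma szero_lie2: "szero \<in> lie2"
  by (simp add: lie2_iff hom_szero szero_lie)

lemma gx_lie2: "gx \<in> lie2"
proof -
  have "hom n gx = (if n = 1 then gx else szero)" for n by (auto simp: hom_def gx_def szero_def)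
  then show ?thesis by (simp add: lie2_iff liepoly.gen_x szero_lie)
qed
lemma gy_lie2: "gy \<in> lie2"
proof -
  have "hom n gy = (if n = 1 then gy else szero)" for n by (auto simp: hom_def gy_def szero_def)
  then show ?thesis by (simp add: lie2_iff liepoly.gen_y szero_lie)
qed
lemma gz_lie2: "gz \<in> lie2"
  unfolding gz_eq by (intro sadd_lie2 ssmul_lie2 gx_lie2 gy_lie2)

lemma nu_lie2: "f \<in> lie2 \<Longrightarrow> nu f \<in> lie2"
  by (simp add: lie2_iff hom_nu nu_lie)

lemma sum_rev_nat: "(\<Sum>k\<le>(n::nat). g k) = (\<Sum>k\<le>n. g (n - k))"
  by (rule sum.reindex_bij_witness[where i="\<lambda>k. n - k" and j="\<lambda>k. n - k"]) auto

lemma hom_br: "hom n (br f g) = (\<lambda>w. \<Sum>k\<le>n. br (hom k f) (hom (n - k) g) w)"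
proof (rule ext)
  fix w
  have r: "(\<Sum>k\<le>n. smul (hom k g) (hom (n - k) f) w) = (\<Sum>k\<le>n. smul (hom (n - k) g) (hom k f) w)"
  proof -
    have "(\<Sum>k\<le>n. smul (hom k g) (hom (n - k) f) w) = (\<Sum>k\<le>n. smul (hom (n - k) g) (hom (n - (n - k)) f) w)"
      by (rule sum_rev_nat)
    also have "\<dots> = (\<Sum>k\<le>n. smul (hom (n - k) g) (hom k f) w)"
      by (rule sum.cong) auto
    finally show ?thesis .
  qed
  show "hom n (br f g) w = (\<Sum>k\<le>n. br (hom k f) (hom (n - k) g) w)"
    unfolding br_def hom_ssub by (simp add: ssub_def hom_smul r sum_subtractf)
qed

lemma br_lie2: "f \<in> lie2 \<Longrightarrow> g \<in> lie2 \<Longrightarrow> br f g \<in> lie2"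
  unfolding lie2_iff hom_br by (auto intro!: sum_lie liepoly.bracket)

lemma der_lie2:
  assumes "u \<in> lie2" "v \<in> lie2" "f \<in> lie2"
  shows "der u v f \<in> lie2"
  using assms unfolding lie2_iff hom_der by (auto intro!: sum_lie der_lie)

lemma E_lie2: "a \<in> lie2 \<Longrightarrow> b \<in> lie2 \<Longrightarrow> f \<in> lie2 \<Longrightarrow> E a b f \<in> lie2"
  unfolding E_def by (intro der_lie2 br_lie2 gx_lie2 gy_lie2)

lemma br_sadd_right: "br f (sadd g h) = sadd (br f g) (br f h)"
  unfolding br_def smul_add_right smul_add_left by (auto simp: sadd_def ssub_def)
lemma br_ssmul_right: "br f (ssmul t g) = ssmul t (br f g)"
  unfolding br_def smul_smult_right smul_smult_left by (auto simp: ssmul_def ssub_def algebra_simps)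
lemma br_ssub_right: "br f (ssub g h) = ssub (br f g) (br f h)"
  unfolding br_def smul_sub_right smul_sub_left by (auto simp: ssub_def)
lemma br_szero_right[simp]: "br f szero = szero"
  unfolding br_def smul_zero_left smul_zero_right by (auto simp: ssub_def szero_def)
lemma br_self[simp]: "br f f = szero"
  by (auto simp: br_def ssub_def szero_def)

lemma der_gz:
  assumes "u [] = 0" "v [] = 0"
  shows "der u v gz = sadd (ssmul (-1) u) (ssmul (-1) v)"
  unfolding gz_eq der_sadd der_ssmul der_gx[of u v, OF assms] der_gy[of u v, OF assms] ..

lemma E_gx: "E a b gx = br gx a"
  unfolding E_def by (rule der_gx) (simp_all add: br_nil)
lemma E_gy: "E a b gy = br gy b"
  unfolding E_def by (rule der_gy) (simp_all add: br_nil)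
lemma E_gz: "E a b gz = sadd (ssmul (-1) (br gx a)) (ssmul (-1) (br gy b))"
  unfolding E_def by (rule der_gz) (simp_all add: br_nil)

lemma E_mult: "E a b (smul f g) = sadd (smul (E a b f) g) (smul f (E a b g))"
  unfolding E_def by (rule der_mult) (simp_all add: br_nil)

lemma good_E: "good (E a b)"
  unfolding E_def by (rule good_der)

lemma E_mon_Nil: "E a b (mon []) = szero"
  unfolding E_def by (rule der_mon_Nil)

lemma main_conj:
  assumes s: "sadd (br gx a) (br gy b) = szero"
  shows "nu (E a b (nu f)) = dI (nu b) f"
proof -
  let ?D1 = "\<lambda>f. nu (E a b (nu f))"
  let ?D2 = "dI (nu b)"
  have D2E: "?D2 = E szero (nu b)" by (simp add: dI_def fun_eq_iff)
  have m1: "nu (E a b (nu (smul f g))) = sadd (smul (?D1 f) g) (smul f (?D1 g))" for f g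
    by (simp add: nu_mult E_mult nu_sadd nu_nu)
  have m2: "?D2 (smul f g) = sadd (smul (?D2 f) g) (smul f (?D2 g))" for f g
    unfolding D2E by (rule E_mult)
  have gx0: "E a b gz = szero"
    unfolding E_gz
  proof (rule ext)
    fix w
    have h: "br gx a w + br gy b w = 0" using fun_cong[OF s, of w] by (simp add: sadd_def szero_def)
    have "sadd (ssmul (-1) (br gx a)) (ssmul (-1) (br gy b)) w = -(br gx a w + br gy b w)"
      by (simp add: sadd_def ssmul_def)
    then show "sadd (ssmul (-1) (br gx a)) (ssmul (-1) (br gy b)) w = szero w" using h by (simp add: szero_def)
  qed
  have mon: "?D1 (mon p) = ?D2 (mon p)" for p
  proof (induction p)
    case Nil
    show ?case unfolding D2E nu_mon_Nil E_mon_Nil by simp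
  next
    case (Cons c p)
    have c: "?D1 (mon [c]) = ?D2 (mon [c])"
    proof (cases c)
      case X
      show ?thesis unfolding X gx_mon[symmetric] D2E nu_gx gx0 E_gx by simp
    next
      case Y
      show ?thesis unfolding Y gy_mon[symmetric] D2E nu_gy E_gy nu_br ..
    qed
    have mc: "mon (c # p) = smul (mon [c]) (mon p)" by (simp add: mon_mult)
    show ?case unfolding mc m1 m2 c Cons ..
  qed
  show ?thesis
    by (rule good_eq[where La="?D1" and Lb="?D2"])
      (auto intro: good_comp[OF good_nu good_comp[OF good_E good_nu]] simp: D2E good_E mon)
qed

lemma nu_len1: "nu f [d] = - f [X] + (if d = Y then f [Y] else 0)"
proof -
  have S: "{v::gen list. length v = length [d]} = {[X], [Y]}"
    using len1_cases by auto
  show ?thesis unfolding nu_def S by (cases d) auto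
qed

lemma conj_E:
  assumes "sadd (br gx a) (br gy b) = szero"
  shows "conjnu (restrict (E a b) lie2) = restrict (dI (nu b)) lie2"
proof (rule ext)
  fix f show "conjnu (restrict (E a b) lie2) f = restrict (dI (nu b)) lie2 f"
    using main_conj[OF assms, of f] nu_lie2[of f] by (auto simp: conjnu_def)
qed

lemma ssmul_szero[simp]: "ssmul t szero = szero" by (simp add: ssmul_def szero_def)
lemma ssub_szero[simp]: "ssub f szero = f" by (simp add: ssub_def szero_def)

lemma dI_shift: "dI (sadd x (ssmul t gy)) = dI x"
  unfolding dI_def E_def br_sadd_right br_ssmul_right br_self by simp

lemma dI_shift': "dI (ssub x (ssmul t gy)) = dI x"
  unfolding dI_def E_def br_ssub_right br_ssmul_right br_self by simp

lemma conjnu_dadd: "conjnu (dadd D1 D2) = dadd (conjnu D1) (conjnu D2)"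
proof (rule ext)
  fix f show "conjnu (dadd D1 D2) f = dadd (conjnu D1) (conjnu D2) f"
    using nu_lie2[of f] by (auto simp: conjnu_def dadd_def nu_sadd)
qed

lemma conjnu_dsmul: "conjnu (dsmul c D) = dsmul c (conjnu D)"
proof (rule ext)
  fix f show "conjnu (dsmul c D) f = dsmul c (conjnu D) f"
    using nu_lie2[of f] by (auto simp: conjnu_def dsmul_def nu_ssmul)
qed

lemma conjnu_dcomm:
  assumes "a1 \<in> lie2" "b1 \<in> lie2" "a2 \<in> lie2" "b2 \<in> lie2"
  shows "conjnu (dcomm (restrict (E a1 b1) lie2) (restrict (E a2 b2) lie2))
       = dcomm (conjnu (restrict (E a1 b1) lie2)) (conjnu (restrict (E a2 b2) lie2))"
proof (rule ext)
  fix f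
  show "conjnu (dcomm (restrict (E a1 b1) lie2) (restrict (E a2 b2) lie2)) f
       = dcomm (conjnu (restrict (E a1 b1) lie2)) (conjnu (restrict (E a2 b2) lie2)) f"
  proof (cases "f \<in> lie2")
    case True
    let ?g = "nu f"
    have g: "?g \<in> lie2" using nu_lie2[OF True] .
    have e1: "E a1 b1 ?g \<in> lie2" using E_lie2[OF assms(1,2) g] .
    have e2: "E a2 b2 ?g \<in> lie2" using E_lie2[OF assms(3,4) g] .
    have c1: "conjnu (restrict (E a1 b1) lie2) f = nu (E a1 b1 ?g)" using True g by (simp add: conjnu_def)
    have c2: "conjnu (restrict (E a2 b2) lie2) f = nu (E a2 b2 ?g)" using True g by (simp add: conjnu_def)
    have n1: "nu (E a1 b1 ?g) \<in> lie2" using nu_lie2[OF e1] .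
    have n2: "nu (E a2 b2 ?g) \<in> lie2" using nu_lie2[OF e2] .
    show ?thesis
      using True g e1 e2 n1 n2 by (simp add: conjnu_def dcomm_def c1 c2 nu_nu nu_ssub)
  next
    case False then show ?thesis by (simp add: conjnu_def dcomm_def)
  qed
qed

lemma restrict_cong_lie2: "(\<And>f. f \<in> lie2 \<Longrightarrow> D1 f = D2 f) \<Longrightarrow> restrict D1 lie2 = restrict D2 lie2"
  by (auto simp: restrict_def fun_eq_iff)

lemma E_gz_zero:
  assumes s: "sadd (br gx a) (br gy b) = szero"
  shows "E a b gz = szero"
  unfolding E_gz
proof (rule ext)
  fix w
  have h: "br gx a w + br gy b w = 0" using fun_cong[OF s, of w] by (simp add: sadd_def szero_def)
  have "sadd (ssmul (-1) (br gx a)) (ssmul (-1) (br gy b)) w = -(br gx a w + br gy b w)"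
    by (simp add: sadd_def ssmul_def)
  then show "sadd (ssmul (-1) (br gx a)) (ssmul (-1) (br gy b)) w = szero w" using h by (simp add: szero_def)
qed

lemma sder_mem: "D \<in> sder2 \<longleftrightarrow> (\<exists>a b. D = restrict (E a b) lie2 \<and> tcond a b \<and> sadd (br gx a) (br gy b) = szero)"
  by (auto simp: sder2_def)
lemma ider_mem: "D \<in> ider2 \<longleftrightarrow> (\<exists>b. D = restrict (E szero b) lie2 \<and> tcond szero b)"
  by (auto simp: ider2_def)

lemma image_sub:
  assumes t: "tcond a b" and s: "sadd (br gx a) (br gy b) = szero"
  shows "conjnu (restrict (E a b) lie2) \<in> ider2"
proof -
  have a: "a \<in> lie2" and b: "b \<in> lie2" using t by (auto simp: tcond_def)
  define b' where "b' = ssub (nu b) (ssmul (nu b [Y]) gy)"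
  have eb: "E szero b' = E szero (nu b)"
    using dI_shift'[of "nu b" "nu b [Y]"] by (simp add: dI_def b'_def)
  have eq: "conjnu (restrict (E a b) lie2) = restrict (E szero b') lie2"
    unfolding conj_E[OF s] eb by (simp add: dI_def)
  have b'l: "b' \<in> lie2" unfolding b'_def by (intro ssub_lie2 nu_lie2 ssmul_lie2 gy_lie2 b)
  have b'Y: "b' [Y] = 0" by (simp add: b'_def ssub_def ssmul_def gy_def)
  have "E szero b' gz = dI (nu b) gz"
    unfolding eb by (simp add: dI_def)
  also have "\<dots> = nu (E a b (nu gz))" using main_conj[OF s, of gz] by simp
  also have "\<dots> = br gz (nu a)" by (simp add: nu_gz E_gx nu_br nu_gx)
  finally have "E szero b' gz = br gz (nu a)" .
  then have "tcond szero b'"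
    unfolding tcond_def using szero_lie2 b'l b'Y nu_lie2[OF a] by (auto simp: szero_def)
  then show ?thesis unfolding eq ider_mem by blast
qed

lemma image_sup:
  assumes t: "tcond szero b'"
  shows "restrict (E szero b') lie2 \<in> conjnu ` sder2"
proof -
  from t obtain c where b'l: "b' \<in> lie2" and b'Y: "b' [Y] = 0" and cl: "c \<in> lie2"
    and ec: "E szero b' gz = br gz c" by (auto simp: tcond_def)
  define b where "b = sadd (nu b') (ssmul (b' [X]) gy)"
  define a where "a = sadd (nu c) (ssmul (c [X]) gx)"
  have al: "a \<in> lie2" unfolding a_def by (intro sadd_lie2 nu_lie2 ssmul_lie2 gx_lie2 cl)
  have bl: "b \<in> lie2" unfolding b_def by (intro sadd_lie2 nu_lie2 ssmul_lie2 gy_lie2 b'l)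
  have aX: "a [X] = 0" by (simp add: a_def sadd_def ssmul_def gx_def nu_len1)
  have bY: "b [Y] = 0" using b'Y by (simp add: b_def sadd_def ssmul_def gy_def nu_len1)
  have bra: "br gx a = br gx (nu c)" unfolding a_def br_sadd_right br_ssmul_right br_self by simp
  have brb: "br gy b = br gy (nu b')" unfolding b_def br_sadd_right br_ssmul_right br_self by simp
  have "ssmul (-1) (br gy b') = br gz c" using ec unfolding E_gz by simp
  then have "nu (ssmul (-1) (br gy b')) = nu (br gz c)" by simp
  then have k: "ssmul (-1) (br gy (nu b')) = br gx (nu c)" by (simp add: nu_ssmul nu_br nu_gy nu_gz)
  have s: "sadd (br gx a) (br gy b) = szero"
    unfolding bra brb k[symmetric] by (auto simp: sadd_def ssmul_def szero_def)
  have tc: "tcond a b"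
    unfolding tcond_def using al bl aX bY E_gz_zero[OF s] szero_lie2 by force
  have nb: "nu b = sadd b' (ssmul (b' [X]) gy)"
    by (simp add: b_def nu_sadd nu_ssmul nu_nu nu_gy)
  have "conjnu (restrict (E a b) lie2) = restrict (E szero b') lie2"
    unfolding conj_E[OF s] nb dI_shift by (simp add: dI_def)
  moreover have "restrict (E a b) lie2 \<in> sder2" unfolding sder_mem using tc s by blast
  ultimately show ?thesis by (metis image_eqI)
qed

theorem lemma25:
  shows "bij_betw conjnu sder2 ider2
    \<and> (\<forall>D1\<in>sder2. \<forall>D2\<in>sder2. conjnu (dadd D1 D2) = dadd (conjnu D1) (conjnu D2))
    \<and> (\<forall>c. \<forall>D\<in>sder2. conjnu (dsmul c D) = dsmul c (conjnu D))
    \<and> (\<forall>D1\<in>sder2. \<forall>D2\<in>sder2. conjnu (dcomm D1 D2) = dcomm (conjnu D1) (conjnu D2))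
    \<and> (\<forall>a b. tcond a b \<and> sadd (br gx a) (br gy b) = szero \<longrightarrow>
          conjnu (restrict (E a b) lie2) = restrict (dI (nu b)) lie2)"
proof -
  have inj: "inj_on conjnu sder2"
  proof (rule inj_onI)
    fix D1 D2 assume d1: "D1 \<in> sder2" and d2: "D2 \<in> sder2" and eq: "conjnu D1 = conjnu D2"
    from d1 obtain a1 b1 where D1: "D1 = restrict (E a1 b1) lie2" unfolding sder_mem by blast
    from d2 obtain a2 b2 where D2: "D2 = restrict (E a2 b2) lie2" unfolding sder_mem by blast
    show "D1 = D2"
    proof (rule ext)
      fix g show "D1 g = D2 g"
      proof (cases "g \<in> lie2")
        case True
        have "conjnu D1 (nu g) = conjnu D2 (nu g)" using eq by simp
        then have "nu (D1 (nu (nu g))) = nu (D2 (nu (nu g)))"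
          using nu_lie2[OF True] by (simp add: conjnu_def)
        then have "nu (nu (D1 g)) = nu (nu (D2 g))" by (simp add: nu_nu)
        then show ?thesis by (simp add: nu_nu)
      next
        case False then show ?thesis by (simp add: D1 D2)
      qed
    qed
  qed
  have img: "conjnu ` sder2 = ider2"
  proof
    show "conjnu ` sder2 \<subseteq> ider2"
      using image_sub by (auto simp: sder_mem)
    show "ider2 \<subseteq> conjnu ` sder2"
      using image_sup by (auto simp: ider_mem)
  qed
  have bij: "bij_betw conjnu sder2 ider2" using inj img by (simp add: bij_betw_def)
  have comm: "\<forall>D1\<in>sder2. \<forall>D2\<in>sder2. conjnu (dcomm D1 D2) = dcomm (conjnu D1) (conjnu D2)"
  proof (intro ballI)
    fix D1 D2 assume d1: "D1 \<in> sder2" and d2: "D2 \<in> sder2"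
    from d1 obtain a1 b1 where D1: "D1 = restrict (E a1 b1) lie2" and t1: "tcond a1 b1" unfolding sder_mem by blast
    from d2 obtain a2 b2 where D2: "D2 = restrict (E a2 b2) lie2" and t2: "tcond a2 b2" unfolding sder_mem by blast
    show "conjnu (dcomm D1 D2) = dcomm (conjnu D1) (conjnu D2)"
      unfolding D1 D2 by (rule conjnu_dcomm) (use t1 t2 in \<open>auto simp: tcond_def\<close>)
  qed
  show ?thesis
    using bij comm conjnu_dadd conjnu_dsmul conj_E by blast
qed

end
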